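(* Let $K\subseteq\mathbb{R}^n$, $\sigma>0$, $\varepsilon\in(0,1/2)$. Given the observed (possibly corrupted) data $X_1,\dots,X_N$ and $R>0$, define the random set $$S(R)=\Big\{\nu\in K:\ \sum_{i=1}^N\mathbb{1}\big(\|X_i-\nu\|>R\big)\le \frac N2-1\Big\}.$$ There exist an absolute constant $\gamma\in(0,1)$ and a constant $R_0$ depending only on $n,\sigma,\varepsilon$ such that for every $R\ge R_0$ (and every $\mu\in K$, every noise distribution in $\Xi_{\sigma^2}$ and every adversary) $$\mathbb{P}\big(\mu\notin S(R)\big)\le \exp\Big[-\frac{N(1/2-\varepsilon)\gamma}{16}\log\Big(1+\frac{R^2}{\sigma^2}\Big)\Big]\wedge\frac12 .$$
   Context: Model: the unknown mean $\mu$ lies in $K$. The uncorrupted sample is $\tilde X_i=\mu+\xi_i$, $i=1,\dots,N$, with $\xi_i$ i.i.d. copies of $\xi$ whose distribution belongs to $\Xi_{\sigma^2}$, the family of all distributions on $\mathbb{R}^n$ with mean zero and covariance $\Sigma\preceq\sigma^2 I$. An adversary, which may inspect the whole uncorrupted sample, replaces at most a fraction $\varepsilon$ of the points by arbitrary points, producing the observed data $X_1,\dots,X_N$. $\|\cdot\|$ is the Euclidean norm, $a\wedge b=\min(a,b)$. *)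

theory Defs
  imports "HOL-Probability.Probability"
begin

text \<open>Points of R^n are represented as functions nat => real whose relevant
coordinates are 0..n-1 (the carrier of the product measure below is the set of
extensional functions on {..<n}).  This explicit-carrier encoding lets the
dimension n be quantified inside the formula (needed since gamma is absolute).\<close>

definition Rn :: "nat \<Rightarrow> (nat \<Rightarrow> real) measure" where
  "Rn n = PiM {..<n} (\<lambda>_. lborel)"

definition enorm :: "nat \<Rightarrow> (nat \<Rightarrow> real) \<Rightarrow> real" where
  "enorm n x = sqrt (\<Sum>j<n. (x j)^2)"

definition mean_vec :: "(nat \<Rightarrow> real) measure \<Rightarrow> nat \<Rightarrow> real" where
  "mean_vec D j = (\<integral>x. x j \<partial>D)"

definition cov_mat :: "(nat \<Rightarrow> real) measure \<Rightarrow> nat \<Rightarrow> nat \<Rightarrow> real" where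
  "cov_mat D i j = (\<integral>x. (x i - mean_vec D i) * (x j - mean_vec D j) \<partial>D)"

text \<open>The family Xi_{s2}: distributions on R^n with mean zero and covariance
Sigma <= s2 * I (Loewner order), finite second moments assumed so that the
covariance exists.\<close>
definition Xi :: "nat \<Rightarrow> real \<Rightarrow> (nat \<Rightarrow> real) measure set" where
  "Xi n s2 = {D. prob_space D \<and> sets D = sets (Rn n) \<and>
     (\<forall>j<n. integrable D (\<lambda>x. x j) \<and> integrable D (\<lambda>x. (x j)^2) \<and> mean_vec D j = 0) \<and>
     (\<forall>v::nat \<Rightarrow> real. (\<Sum>i<n. \<Sum>j<n. v i * cov_mat D i j * v j) \<le> s2 * (\<Sum>j<n. (v j)^2))}"

text \<open>Uncorrupted sample: tilde X_i = mu + xi_i, i < N (0-based indices).\<close>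
definition clean_sample :: "nat \<Rightarrow> (nat \<Rightarrow> real) \<Rightarrow> (nat \<Rightarrow> nat \<Rightarrow> real) \<Rightarrow> nat \<Rightarrow> nat \<Rightarrow> real" where
  "clean_sample n \<mu> \<xi> = (\<lambda>i. restrict (\<lambda>j. \<mu> j + \<xi> i j) {..<n})"

definition adversary :: "nat \<Rightarrow> nat \<Rightarrow> real \<Rightarrow>
    ((nat \<Rightarrow> nat \<Rightarrow> real) \<Rightarrow> (nat \<Rightarrow> nat \<Rightarrow> real)) \<Rightarrow> bool" where
  "adversary n N \<epsilon> A \<longleftrightarrow>
     (\<forall>x. real (card {i\<in>{..<N}. \<exists>j<n. A x i j \<noteq> x i j}) \<le> \<epsilon> * real N)"

definition S_set :: "nat \<Rightarrow> (nat \<Rightarrow> real) set \<Rightarrow> nat \<Rightarrow> (nat \<Rightarrow> nat \<Rightarrow> real) \<Rightarrow> real \<Rightarrow> (nat \<Rightarrow> real) set" where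
  "S_set n K N X R = {\<nu>\<in>K. (\<Sum>i<N. if enorm n (\<lambda>j. X i j - \<nu> j) > R then 1 else 0 :: real) \<le> real N / 2 - 1}"

end

theory Submission
  imports Defs
begin

lemma delta2:
  assumes j: "j < (n::nat)"
  shows "c j j = (\<Sum>i<n. \<Sum>l<n. (if i = j then 1 else 0) * (c i l::real) * (if l = j then 1 else 0))"
proof -
  have "\<And>i. (\<Sum>l<n. (if i = j then 1 else 0) * (c i l::real) * (if l = j then 1 else 0)) = (if i = j then c i j else 0)"
  proof -
    fix i
    have "(\<Sum>l<n. (if i = j then 1 else 0) * (c i l::real) * (if l = j then 1 else 0)) = (\<Sum>l<n. if l = j then (if i = j then c i l else 0) else 0)"
      by (rule sum.cong) auto
    also have "\<dots> = (if i = j then c i j else 0)" using j by (subst sum.delta) auto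
    finally show "?thesis i" .
  qed
  then have "(\<Sum>i<n. \<Sum>l<n. (if i = j then 1 else 0) * (c i l::real) * (if l = j then 1 else 0)) = (\<Sum>i<n. if i = j then c i j else 0)"
    by simp
  also have "\<dots> = c j j" using j by (subst sum.delta) auto
  finally show ?thesis by (rule sym)
qed

lemma prod_bound:
  fixes D :: "'a measure"
  assumes PD: "prob_space D" and G: "G \<in> sets D"
  shows "measure (PiM {..<N} (\<lambda>_. D)) (\<Union>I\<in>{I. I \<subseteq> {..<N} \<and> card I = k}. PiE {..<N} (\<lambda>i. if i\<in>I then G else space D))
     \<le> real (N choose k) * measure D G ^ k"
proof -
  interpret product_prob_space "\<lambda>_. D" "{..<N}"
    by (rule product_prob_spaceI) (rule PD)
  let ?M = "PiM {..<N} (\<lambda>_. D)"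
  let ?F = "{I. I \<subseteq> {..<N} \<and> card I = k}"
  let ?T = "\<lambda>I. PiE {..<N} (\<lambda>i. if i\<in>I then G else space D)"
  have finF: "finite ?F" by (rule finite_subset[of _ "Pow {..<N}"]) auto
  have Tm: "?T I \<in> sets ?M" for I
    by (rule sets_PiM_I_finite) (auto simp: G)
  have mT: "measure ?M (?T I) = measure D G ^ k" if "I \<in> ?F" for I
  proof -
    have "emeasure ?M (?T I) = (\<Prod>i<N. emeasure D (if i\<in>I then G else space D))"
      by (rule emeasure_PiM) (auto simp: G)
    also have "\<dots> = (\<Prod>i<N. ennreal (if i\<in>I then measure D G else 1))"
      using G by (intro prod.cong) (auto simp: M.emeasure_eq_measure M.prob_space)
    also have "\<dots> = ennreal (\<Prod>i<N. (if i\<in>I then measure D G else 1))"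
      by (simp add: prod_ennreal)
    also have "(\<Prod>i<N. (if i\<in>I then measure D G else 1)) = measure D G ^ card I"
      using that by (simp add: prod.If_cases Int_absorb1 )
    finally have "emeasure ?M (?T I) = ennreal (measure D G ^ k)" using that by simp
    then show ?thesis by (simp add: measure_def)
  qed
  have "measure ?M (\<Union>I\<in>?F. ?T I) \<le> (\<Sum>I\<in>?F. measure ?M (?T I))"
    by (rule measure_UNION_le[OF finF Tm])
  also have "\<dots> = (\<Sum>I\<in>?F. measure D G ^ k)" by (rule sum.cong) (auto simp: mT)
  also have "\<dots> = real (N choose k) * measure D G ^ k"
    using n_subsets[of "{..<N}" k] by simp
  finally show ?thesis .
qed

lemma cheb:
  assumes D: "D \<in> Xi n s2" and R: "0 < R"
  shows "{x\<in>space D. enorm n x > R} \<in> sets D"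
    and "measure D {x\<in>space D. enorm n x > R} \<le> real n * s2 / R^2"
proof -
  have PD: "prob_space D" and int1: "\<And>j. j<n \<Longrightarrow> integrable D (\<lambda>x. x j)"
    and int2: "\<And>j. j<n \<Longrightarrow> integrable D (\<lambda>x. (x j)^2)"
    and mean: "\<And>j. j<n \<Longrightarrow> mean_vec D j = 0"
    and cov: "\<And>v. (\<Sum>i<n. \<Sum>j<n. v i * cov_mat D i j * v j) \<le> s2 * (\<Sum>j<n. (v j)^2)"
    using D by (auto simp: Xi_def)
  interpret prob_space D by (rule PD)
  have mj[measurable]: "(\<lambda>x. x j) \<in> borel_measurable D" if "j<n" for j
    using int1[OF that] by auto
  have mu[measurable]: "(\<lambda>x. \<Sum>j<n. (x j)^2) \<in> borel_measurable D"
    by (rule borel_measurable_sum) (use mj in auto)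
  have me: "enorm n \<in> borel_measurable D"
    unfolding enorm_def by (rule measurable_compose[OF mu borel_measurable_sqrt])
  show Gs: "{x\<in>space D. enorm n x > R} \<in> sets D"
    using me by measurable
  have intu: "integrable D (\<lambda>x. \<Sum>j<n. (x j)^2)"
    using int2 by (auto intro!: integrable_sum)
  have sub: "{x\<in>space D. enorm n x > R} \<subseteq> {x\<in>space D. (\<Sum>j<n. (x j)^2) \<ge> R^2}"
  proof safe
    fix x assume "x \<in> space D" "R < enorm n x"
    then have "R^2 < (enorm n x)^2" using R by (intro power_strict_mono) auto
    also have "(enorm n x)^2 = (\<Sum>j<n. (x j)^2)" unfolding enorm_def
      by (simp add: sum_nonneg)
    finally show "R^2 \<le> (\<Sum>j<n. (x j)^2)" by simp
  qed
  have "measure D {x\<in>space D. enorm n x > R} \<le> measure D {x\<in>space D. (\<Sum>j<n. (x j)^2) \<ge> R^2}"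
    by (rule finite_measure_mono[OF sub]) measurable
  also have "\<dots> \<le> (\<integral>x. (\<Sum>j<n. (x j)^2) \<partial>D) / R^2"
    by (rule integral_Markov_inequality_measure[OF intu, where A="space D"])
       (use R in \<open>auto simp: sum_nonneg\<close>)
  also have "(\<integral>x. (\<Sum>j<n. (x j)^2) \<partial>D) = (\<Sum>j<n. \<integral>x. (x j)^2 \<partial>D)"
    by (rule Bochner_Integration.integral_sum) (use int2 in auto)
  also have "\<dots> \<le> (\<Sum>j<n. s2)"
  proof (rule sum_mono)
    fix j assume "j \<in> {..<n}"
    then have j: "j < n" by simp
    have "(\<integral>x. (x j)^2 \<partial>D) = cov_mat D j j"
      unfolding cov_mat_def using mean[OF j] by (simp add: power2_eq_square)
    also have "cov_mat D j j = (\<Sum>i<n. \<Sum>l<n. (if i = j then 1 else 0) * cov_mat D i l * (if l = j then 1 else 0))"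
      using delta2[OF j] by simp
    also have "\<dots> \<le> s2 * (\<Sum>l<n. (if l = j then 1 else 0)^2)" by (rule cov)
    also have "\<dots> = s2"
    proof -
      have "(\<Sum>l<n. (if l = j then 1 else 0::real)^2) = (\<Sum>l<n. if l = j then 1 else 0)"
        by (rule sum.cong) auto
      then show ?thesis using j by simp
    qed
    finally show "(\<integral>x. (x j)^2 \<partial>D) \<le> s2" .
  qed
  finally show "measure D {x\<in>space D. enorm n x > R} \<le> real n * s2 / R^2"
    using R by (simp add: divide_right_mono)
qed

lemma arith_bound:
  fixes N k n :: nat and a C q t :: real
  assumes a: "0 < a" and k: "1 \<le> k" and Nk: "real N * a \<le> 2 * real k"
    and C: "C = 4 powr (1/a)"
    and t: "t \<ge> 1 + 2*C*n + 2*C^2*n^2"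
    and q0: "0 \<le> q" and q: "q \<le> n / t"
  shows "real (N choose k) * q^k \<le> min (exp (- (real N * a * (1/2) / 16) * ln (1 + t))) (1/2)"
proof -
  have C1: "C \<ge> 1" unfolding C using a by (simp add: ge_one_powr_ge_zero)
  have t1: "t \<ge> 1" using t C1 by (smt (verit) mult_nonneg_nonneg of_nat_0_le_iff zero_le_power2)
  define p where "p = C * n / t"
  have p0: "0 \<le> p" unfolding p_def using C1 t1 by simp
  have bin: "real (N choose k) \<le> C ^ k"
  proof -
    have "real (N choose k) \<le> 2 ^ N" using binomial_le_pow2[of N k]
      by (metis of_nat_le_iff of_nat_numeral of_nat_power)
    also have "(2::real) ^ N = 2 powr N" by (simp add: powr_realpow)
    also have "\<dots> \<le> 2 powr (2 * k / a)"
      using Nk a by (intro powr_mono) (auto simp: field_simps)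
    also have "2 powr (2 * k / a) = (2 powr 2) powr (k / a)" by (simp only: powr_powr) (simp add: field_simps)
    also have "\<dots> = 4 powr (k/a)" by simp
    also have "\<dots> = (4 powr (1/a)) powr k" by (simp add: powr_powr)
    also have "\<dots> = C ^ k" unfolding C by (simp add: powr_realpow)
    finally show ?thesis .
  qed
  have "real (N choose k) * q^k \<le> C^k * q^k" using bin q0 by (intro mult_right_mono) auto
  also have "\<dots> = (C*q)^k" by (simp add: power_mult_distrib)
  also have "\<dots> \<le> p^k"
  proof -
    have "C*q \<le> C*(n/t)" using q C1 by (intro mult_left_mono) auto
    then have "C*q \<le> p" by (simp add: p_def)
    then show ?thesis using C1 q0 by (intro power_mono) auto
  qed
  finally have L: "real (N choose k) * q^k \<le> p^k" .
  have Cn0: "0 \<le> C * n" using C1 by simp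
  have "0 \<le> 2*C^2*n^2" by simp
  then have tCn: "2*(C*n) \<le> t" using t Cn0 by (simp only: mult.assoc[symmetric])
  have p2: "p \<le> 1/2" unfolding p_def using tCn t1 by (simp add: pos_divide_le_eq)
  have pk: "p^k \<le> p" using power_decreasing[of 1 k p] p0 p2 k by simp 
  have E: "p^k \<le> exp (- (real N * a * (1/2) / 16) * ln (1 + t))"
  proof (cases "p = 0")
    case True then show ?thesis using k by (simp add: power_0_left)
  next
    case False
    then have pp: "p > 0" using p0 by simp
    have key: "p^16 * (1+t) \<le> 1"
    proof -
      have "(C*n)^2 = C^2*n^2" by (simp add: power_mult_distrib)
      moreover have "0 \<le> 2*C*n" using Cn0 by simp
      ultimately have "(C*n)^2 \<le> t/2" using t by linarith
      then have "((C*n)^2)^8 \<le> (t/2)^8" by (intro power_mono) auto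
      moreover have "((C*n)^2)^8 = (C*n)^16" by (simp flip: power_mult)
      ultimately have A: "(C*n)^16 \<le> (t/2)^8" by simp
      have "p^16 * (1+t) = (C*n)^16 * (1+t) / t^16" unfolding p_def by (simp add: power_divide)
      also have "\<dots> \<le> (t/2)^8 * (2*t) / t^16" using A t1
        by (intro divide_right_mono mult_mono) auto
      also have "\<dots> \<le> 1"
      proof -
        have "(t/2)^8 * (2*t) = t^9 / 128"
        proof -
          have "t^9 = t^8 * t" by (metis power_Suc2 numeral_nat(2) Suc_numeral semiring_norm(5))
          then show ?thesis by (simp add: power_divide)
        qed
        also have "\<dots> \<le> t^9" using t1 by simp
        also have "\<dots> \<le> t^16" using t1 by (intro power_increasing) auto
        finally show ?thesis using t1 by (simp add: divide_le_eq)
      qed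
      finally show ?thesis .
    qed
    have lk: "16 * ln p + ln (1+t) \<le> 0"
    proof -
      have "ln (p^16 * (1+t)) \<le> 0" using key pp t1 by simp
      then show ?thesis using pp t1 by (simp add: ln_mult ln_realpow)
    qed
    have lp: "ln p \<le> 0" using pp p2 by simp
    have "p^k = exp (k * ln p)" using pp by (simp add: exp_of_nat_mult)
    also have "k * ln p \<le> - (real N * a * (1/2) / 16) * ln (1 + t)"
    proof -
      have "k * ln p \<le> k * (- ln (1+t) / 16)" using lk by (intro mult_left_mono) auto
      also have "\<dots> \<le> - (real N * a * (1/2) / 16) * ln (1 + t)"
      proof -
        have L0: "0 \<le> ln (1+t)" using t1 by simp
        have "(real N * a * (1/2) / 16) * ln (1 + t) \<le> (real k / 16) * ln (1+t)"
          using Nk L0 by (intro mult_right_mono) (auto simp: mult.commute)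
        then show ?thesis by simp
      qed
      finally show ?thesis .
    qed
    then have "exp (k * ln p) \<le> exp (- (real N * a * (1/2) / 16) * ln (1 + t))" by simp
    finally show ?thesis .
  qed
  show ?thesis using L pk p2 E by simp
qed


theorem mainTheorem5:
  shows "\<exists>\<gamma>::real. 0 < \<gamma> \<and> \<gamma> < 1 \<and>
    (\<forall>(n::nat) (\<sigma>::real) (\<epsilon>::real). 0 < \<sigma> \<and> 0 < \<epsilon> \<and> \<epsilon> < 1/2 \<longrightarrow>
      (\<exists>R0::real. \<forall>(R::real) (K::(nat \<Rightarrow> real) set) (N::nat) (\<mu>::nat \<Rightarrow> real)
          (D::(nat \<Rightarrow> real) measure) (A::(nat \<Rightarrow> nat \<Rightarrow> real) \<Rightarrow> (nat \<Rightarrow> nat \<Rightarrow> real)).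
        R \<ge> R0 \<and> 0 < R \<and> K \<subseteq> space (Rn n) \<and> \<mu> \<in> K \<and> D \<in> Xi n (\<sigma>^2) \<and>
        adversary n N \<epsilon> A \<and> real_of_int \<lfloor>\<epsilon> * real N\<rfloor> \<le> real N / 2 - 1 \<longrightarrow>
        (\<exists>B \<in> sets (PiM {..<N} (\<lambda>_. D)).
           {\<xi> \<in> space (PiM {..<N} (\<lambda>_. D)). \<mu> \<notin> S_set n K N (A (clean_sample n \<mu> \<xi>)) R} \<subseteq> B \<and>
           measure (PiM {..<N} (\<lambda>_. D)) B \<le>
             min (exp (- (real N * (1/2 - \<epsilon>) * \<gamma> / 16) * ln (1 + R^2 / \<sigma>^2))) (1/2))))"
proof (rule exI[of _ "1/2"], intro conjI allI impI)
  fix n :: nat and \<sigma> \<epsilon> :: real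
  assume h: "0 < \<sigma> \<and> 0 < \<epsilon> \<and> \<epsilon> < 1/2"
  then have s0: "0 < \<sigma>" and e0: "0 < \<epsilon>" and e1: "\<epsilon> < 1/2" by auto
  define a where "a = 1/2 - \<epsilon>"
  have a0: "0 < a" using e1 by (simp add: a_def)
  define C where "C = 4 powr (1/a)"
  define c0 where "c0 = 1 + 2*C*n + 2*C^2*n^2"
  have c00: "0 \<le> c0" unfolding c0_def C_def by simp
  show "\<exists>R0. \<forall>R K N \<mu> D A. R0 \<le> R \<and> 0 < R \<and> K \<subseteq> space (Rn n) \<and> \<mu> \<in> K \<and> D \<in> Xi n (\<sigma>\<^sup>2) \<and>
        adversary n N \<epsilon> A \<and> real_of_int \<lfloor>\<epsilon> * real N\<rfloor> \<le> real N / 2 - 1 \<longrightarrow>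
        (\<exists>B\<in>sets (Pi\<^sub>M {..<N} (\<lambda>_. D)).
           {\<xi> \<in> space (Pi\<^sub>M {..<N} (\<lambda>_. D)). \<mu> \<notin> S_set n K N (A (clean_sample n \<mu> \<xi>)) R} \<subseteq> B \<and>
           measure (Pi\<^sub>M {..<N} (\<lambda>_. D)) B
           \<le> min (exp (- (real N * (1 / 2 - \<epsilon>) * (1 / 2) / 16) * ln (1 + R\<^sup>2 / \<sigma>\<^sup>2))) (1 / 2))"
  proof (rule exI[of _ "\<sigma> * sqrt c0"], intro allI impI)
    fix R K N \<mu> D A
    assume H: "\<sigma> * sqrt c0 \<le> R \<and> 0 < R \<and> K \<subseteq> space (Rn n) \<and> \<mu> \<in> K \<and> D \<in> Xi n (\<sigma>\<^sup>2) \<and>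
        adversary n N \<epsilon> A \<and> real_of_int \<lfloor>\<epsilon> * real N\<rfloor> \<le> real N / 2 - 1"
    then have RR0: "\<sigma> * sqrt c0 \<le> R" and R0: "0 < R" and muK: "\<mu> \<in> K" and DX: "D \<in> Xi n (\<sigma>\<^sup>2)"
      and adv: "adversary n N \<epsilon> A" and mN: "real_of_int \<lfloor>\<epsilon> * real N\<rfloor> \<le> real N / 2 - 1"
      by auto
    define t where "t = R^2 / \<sigma>^2"
    have tc: "t \<ge> c0"
    proof -
      have "(\<sigma> * sqrt c0)^2 \<le> R^2" using RR0 s0 c00 by (intro power_mono) auto
      then have "\<sigma>^2 * c0 \<le> R^2" using c00 by (simp add: power_mult_distrib)
      then show ?thesis unfolding t_def using s0 by (simp add: pos_le_divide_eq mult.commute)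
    qed
    have PD: "prob_space D" using DX by (simp add: Xi_def)
    define G where "G = {x\<in>space D. enorm n x > R}"
    have Gs: "G \<in> sets D" unfolding G_def by (rule cheb(1)[OF DX R0])
    have qb: "measure D G \<le> real n * \<sigma>^2 / R^2" unfolding G_def by (rule cheb(2)[OF DX R0])
    have qt: "measure D G \<le> n / t" using qb unfolding t_def by simp
    define m where "m = \<lfloor>\<epsilon> * real N\<rfloor>"
    define k where "k = nat (\<lceil>(real N - 1)/2\<rceil> - m)"
    have ce: "real_of_int \<lceil>(real N - 1)/2\<rceil> \<ge> (real N - 1)/2" by simp
    have me: "real_of_int m \<le> \<epsilon> * real N" unfolding m_def by simp
    have mN': "real_of_int m \<le> real N / 2 - 1" using mN unfolding m_def .
    have "real_of_int (\<lceil>(real N - 1)/2\<rceil> - m) > 0"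
    proof -
      have gen: "0 < real_of_int c - real_of_int m" if "(real N - 1)/2 \<le> real_of_int c" for c
        using that mN' by (simp add: field_simps)
      show ?thesis using gen[OF ce] by simp
    qed
    then have kpos: "\<lceil>(real N - 1)/2\<rceil> - m > 0" by simp
    have kr: "real k = real_of_int (\<lceil>(real N - 1)/2\<rceil> - m)" unfolding k_def using kpos by simp
    have k1: "1 \<le> k" unfolding k_def using kpos by simp
    have Na: "real N * a = real N / 2 - \<epsilon> * real N" unfolding a_def by (simp add: algebra_simps)
    have Nk: "real N * a \<le> 2 * real k"
    proof -
      have gen: "real N * a \<le> 2*(real_of_int c - real_of_int m)"
        if "(real N - 1)/2 \<le> real_of_int c" "1 \<le> real_of_int c - real_of_int m" for c
        using that Na me by (simp add: field_simps)
      have "real k \<ge> 1" using k1 by simp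
      then show ?thesis using gen[OF ce] kr by simp
    qed
    let ?M = "PiM {..<N} (\<lambda>_. D)"
    let ?F = "{I. I \<subseteq> {..<N} \<and> card I = k}"
    let ?T = "\<lambda>I. PiE {..<N} (\<lambda>i. if i\<in>I then G else space D)"
    have finF: "finite ?F" by (rule finite_subset[of _ "Pow {..<N}"]) auto
    show "\<exists>B\<in>sets ?M.
           {\<xi> \<in> space ?M. \<mu> \<notin> S_set n K N (A (clean_sample n \<mu> \<xi>)) R} \<subseteq> B \<and>
           measure ?M B
           \<le> min (exp (- (real N * (1 / 2 - \<epsilon>) * (1 / 2) / 16) * ln (1 + R\<^sup>2 / \<sigma>\<^sup>2))) (1 / 2)"
    proof (intro bexI[of _ "\<Union>I\<in>?F. ?T I"] conjI)
      show "(\<Union>I\<in>?F. ?T I) \<in> sets ?M"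
        using finF by (intro sets.finite_UN sets_PiM_I_finite) (auto simp: Gs)
      have "measure ?M (\<Union>I\<in>?F. ?T I) \<le> real (N choose k) * measure D G ^ k"
        by (rule prod_bound[OF PD Gs])
      also have "\<dots> \<le> min (exp (- (real N * a * (1/2) / 16) * ln (1 + t))) (1/2)"
        by (rule arith_bound[OF a0 k1 Nk C_def]) (use tc qt in \<open>auto simp: c0_def\<close>)
      finally show "measure ?M (\<Union>I\<in>?F. ?T I)
           \<le> min (exp (- (real N * (1 / 2 - \<epsilon>) * (1 / 2) / 16) * ln (1 + R\<^sup>2 / \<sigma>\<^sup>2))) (1 / 2)"
        unfolding a_def t_def .
      show "{\<xi> \<in> space ?M. \<mu> \<notin> S_set n K N (A (clean_sample n \<mu> \<xi>)) R} \<subseteq> (\<Union>I\<in>?F. ?T I)"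
      proof safe
        fix \<xi> assume \<xi>: "\<xi> \<in> space ?M" and nS: "\<mu> \<notin> S_set n K N (A (clean_sample n \<mu> \<xi>)) R"
        define X where "X = A (clean_sample n \<mu> \<xi>)"
        define Bd where "Bd = {i\<in>{..<N}. enorm n (\<lambda>j. X i j - \<mu> j) > R}"
        define Cs where "Cs = {i\<in>{..<N}. \<exists>j<n. X i j \<noteq> clean_sample n \<mu> \<xi> i j}"
        define Cb where "Cb = {i\<in>{..<N}. enorm n (\<xi> i) > R}"
        have sumBd: "(\<Sum>i<N. if enorm n (\<lambda>j. X i j - \<mu> j) > R then 1 else 0 :: real) = real (card Bd)"
          unfolding Bd_def by (simp add: sum.If_cases Int_def)
        have cBd: "real (card Bd) > real N / 2 - 1"
        proof -
          have "\<not> (\<Sum>i<N. if enorm n (\<lambda>j. X i j - \<mu> j) > R then 1 else 0 :: real) \<le> real N / 2 - 1"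
            using nS muK unfolding S_set_def X_def[symmetric] by auto
          then show ?thesis using sumBd by linarith
        qed
        have cCs: "real (card Cs) \<le> \<epsilon> * real N"
          using adv unfolding adversary_def Cs_def X_def by blast
        have cCs': "int (card Cs) \<le> m" unfolding m_def using cCs by (simp add: le_floor_iff)
        have sub: "Bd \<subseteq> Cb \<union> Cs"
        proof
          fix i assume i: "i \<in> Bd"
          show "i \<in> Cb \<union> Cs"
          proof (cases "i \<in> Cs")
            case False
            then have eq: "\<forall>j<n. X i j = \<mu> j + \<xi> i j" using i
              unfolding Cs_def Bd_def clean_sample_def by auto
            have "enorm n (\<lambda>j. X i j - \<mu> j) = enorm n (\<xi> i)"
              unfolding enorm_def using eq by (intro arg_cong[where f=sqrt] sum.cong) auto
            then show ?thesis using i unfolding Bd_def Cb_def by auto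
          qed auto
        qed
        have "card Bd \<le> card (Cb \<union> Cs)" by (rule card_mono[OF _ sub]) (auto simp: Cb_def Cs_def)
        also have "\<dots> \<le> card Cb + card Cs" by (rule card_Un_le)
        finally have cc: "card Bd \<le> card Cb + card Cs" .
        have "2 * int (card Bd) > int N - 2" using cBd by linarith
        then have "2 * int (card Bd) \<ge> int N - 1" by linarith
        then have "real_of_int (int N - 1) \<le> real_of_int (2 * int (card Bd))" by (simp only: of_int_le_iff)
        then have "real N - 1 \<le> 2 * real (card Bd)" by simp
        then have "real_of_int (int (card Bd)) \<ge> (real N - 1) / 2" by simp
        then have "\<lceil>(real N - 1)/2\<rceil> \<le> int (card Bd)" by (simp add: ceiling_le_iff)
        then have kCb: "k \<le> card Cb" unfolding k_def using cc cCs' by linarith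
        obtain I where I: "I \<subseteq> Cb" "card I = k" "finite I"
          using obtain_subset_with_card_n[OF kCb] by blast
        have IF: "I \<in> ?F" using I unfolding Cb_def by auto
        have "\<xi> \<in> ?T I"
          using \<xi> I(1) unfolding space_PiM Cb_def G_def by (auto simp: PiE_iff)
        then show "\<xi> \<in> (\<Union>I\<in>?F. ?T I)" using IF by blast
      qed
    qed
  qed
qed (simp_all)

end
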